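(* There exists $e\in S$ such that $(g(e))_{g\in\Gamma_f}$ is a basis of $S$ over $S_0$. Moreover, $e$ can be chosen so that $p$ divides none of the elements $p_i(e)$, $0\le i\le p-2$, where $p_i=\frac{1}{|\Gamma_f|}\sum_{g\in\Gamma_f}\chi(g)^{-i}g$.
   Context: $p$ odd prime, $\mathcal{K}$ absolutely unramified complete discretely valued field of characteristic $0$ with perfect residue field $k$, $W=W(k)$, $\chi$ the cyclotomic character of $\Gamma_{\mathcal{K}}$. $\pi=[\varepsilon]-1\in W(R)$ where $\varepsilon$ is a compatible system of $p^n$-th roots of unity ($\varepsilon^{(1)}\ne1$), $S=W[[\pi]]$ with action $g(\pi)=(1+\pi)^{\chi(g)}-1$ of $\Gamma=\mathrm{Gal}(\mathcal{K}(\mu_{p^\infty})/\mathcal{K})$; $\Gamma_f$ is the torsion subgroup of $\Gamma$ (of order $p-1$) and $S_0=S^{\Gamma_f}=W[[\pi_0]]$ with $\pi_0=-p+\sum_{a\in\mathbb{F}_p}[\varepsilon]^a$. *)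

theory Defs
  imports "HOL-Computational_Algebra.Formal_Power_Series"
begin

text \<open>Abstract characterisation of W = W(k), k a perfect field of characteristic p:
  a p-torsion-free, p-adically separated and complete commutative ring whose
  reduction modulo p is a (nonzero) perfect field.\<close>
definition witt_like :: "nat \<Rightarrow> 'w::comm_ring_1 itself \<Rightarrow> bool" where
  "witt_like p _ \<longleftrightarrow>
     (\<forall>x::'w. of_nat p * x = 0 \<longrightarrow> x = 0) \<and>
     \<not> (of_nat p dvd (1::'w)) \<and>
     (\<forall>x::'w. \<not> of_nat p dvd x \<longrightarrow> (\<exists>y. of_nat p dvd (x * y - 1))) \<and>
     (\<forall>x::'w. \<exists>y. of_nat p dvd (y ^ p - x)) \<and>
     (\<forall>x::'w. (\<forall>n. of_nat p ^ n dvd x) \<longrightarrow> x = 0) \<and>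
     (\<forall>s::nat \<Rightarrow> 'w. (\<forall>n. of_nat p ^ n dvd (s (Suc n) - s n)) \<longrightarrow>
        (\<exists>x. \<forall>n. of_nat p ^ n dvd (x - s n)))"

definition winv :: "'w::comm_ring_1 \<Rightarrow> 'w" where
  "winv x = (THE y. x * y = 1)"

definition wbinom :: "'w::comm_ring_1 \<Rightarrow> nat \<Rightarrow> 'w" where
  "wbinom z n = (THE c. of_nat (fact n) * c = (\<Prod>j<n. z - of_nat j))"

text \<open>The power series (1+pi)^zeta - 1.\<close>
definition cyc_sub :: "'w::comm_ring_1 \<Rightarrow> 'w fps" where
  "cyc_sub z = Abs_fps (\<lambda>n. if n = 0 then 0 else wbinom z n)"

text \<open>Action of g with chi(g) = zeta on S = W[[pi]]: pi maps to (1+pi)^zeta - 1.\<close>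
definition gact :: "'w::comm_ring_1 \<Rightarrow> 'w fps \<Rightarrow> 'w fps" where
  "gact z f = fps_compose f (cyc_sub z)"

text \<open>Gamma_f, identified via chi with the (p-1)-st roots of unity of Z_p (= those of W).\<close>
definition Gamma_f :: "nat \<Rightarrow> 'w::comm_ring_1 set" where
  "Gamma_f p = {z. z ^ (p - 1) = 1}"

definition S0 :: "nat \<Rightarrow> 'w::comm_ring_1 fps set" where
  "S0 p = {f. \<forall>z\<in>Gamma_f p. gact z f = f}"

definition proj :: "nat \<Rightarrow> nat \<Rightarrow> 'w::comm_ring_1 fps \<Rightarrow> 'w fps" where
  "proj p i f = fps_const (winv (of_nat (card (Gamma_f p :: 'w set)))) *
      (\<Sum>z\<in>Gamma_f p. fps_const (winv z ^ i) * gact z f)"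

end

theory Submission
  imports Defs "HOL-Number_Theory.Number_Theory"
begin

unbundle fps_syntax

locale wl =
  fixes p :: nat and W :: "'w::comm_ring_1 itself"
  assumes prime: "prime p" and odd: "odd p" and wlk: "witt_like p W"
begin

abbreviation P :: 'w where "P \<equiv> of_nat p"

lemma tf: "P * x = 0 \<Longrightarrow> x = 0"
  using wlk unfolding witt_like_def by blast
lemma nunit: "\<not> P dvd 1"
  using wlk unfolding witt_like_def by blast
lemma invmod: "\<not> P dvd x \<Longrightarrow> \<exists>y. P dvd (x * y - 1)"
  using wlk unfolding witt_like_def by blast
lemma sep: "(\<And>n. P ^ n dvd x) \<Longrightarrow> x = 0"
  using wlk unfolding witt_like_def by blast
lemma compl: "(\<And>n. P ^ n dvd (s (Suc n) - s n)) \<Longrightarrow> \<exists>x. \<forall>n. P ^ n dvd (x - s n)"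
  using wlk unfolding witt_like_def by blast

lemma geom: "\<exists>y. (1 - P * x) * y = 1"
proof -
  define s where "s n = (\<Sum>j<n. (P * x) ^ j)" for n
  have "P ^ n dvd (s (Suc n) - s n)" for n
    by (simp add: s_def power_mult_distrib)
  then obtain y where y: "\<And>n. P ^ n dvd (y - s n)" using compl by blast
  have "P ^ n dvd ((1 - P * x) * y - 1)" for n
  proof -
    have g: "(1 - y) * (\<Sum>j<k. y ^ j) = 1 - y ^ k" for y :: 'w and k
      by (simp add: one_diff_power_eq)
    have e: "(1 - P * x) * s n = 1 - (P * x) ^ n"
      unfolding s_def by (rule g)
    have "(1 - P * x) * y - 1 = (1 - P * x) * (y - s n) - (P*x)^n"
      using e by (simp add: algebra_simps)
    moreover have "P ^ n dvd (1 - P * x) * (y - s n) - (P*x)^n"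
      using y[of n] by (simp add: power_mult_distrib)
    ultimately show ?thesis by simp
  qed
  then show ?thesis using sep[of "(1 - P * x) * y - 1"] by auto
qed

lemma unit: assumes "\<not> P dvd x" shows "\<exists>y. x * y = 1"
proof -
  obtain y0 where "P dvd (x * y0 - 1)" using invmod assms by blast
  then obtain q where q: "x * y0 - 1 = P * q" by (auto elim: dvdE)
  obtain v where v: "(1 - P * (-q)) * v = 1" using geom by blast
  have "x * (y0 * v) = (1 - P * (-q)) * v" using q by (simp add: algebra_simps)
  then show ?thesis using v by metis
qed

lemma pprime: assumes "P dvd x * y" shows "P dvd x \<or> P dvd y"
proof (rule ccontr)
  assume "\<not> ?thesis"
  then obtain a b where "x * a = 1" "y * b = 1" using unit by blast
  then have "(x * y) * (a * b) = 1" by (simp add: algebra_simps)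
  then have "P dvd 1" using assms by (metis dvd_mult2)
  then show False using nunit by simp
qed

lemma int_ndvd: assumes "\<not> int p dvd m" shows "\<not> P dvd of_int m"
proof
  assume "P dvd of_int m"
  have "coprime (int p) m" using assms prime
    by (simp add: prime_imp_coprime_int prime_nat_iff_prime)
  then obtain s t where "s * int p + t * m = 1"
    by (metis bezout_int coprime_iff_gcd_eq_1)
  then have "of_int s * P + of_int t * of_int m = (1::'w)"
    by (metis of_int_1 of_int_add of_int_mult of_int_of_nat_eq)
  moreover have "P dvd of_int s * P + of_int t * of_int m"
    using \<open>P dvd of_int m\<close> by simp
  ultimately show False using nunit by simp
qed

lemma nat_ndvd: assumes "\<not> p dvd m" shows "\<not> P dvd of_nat m"
  using int_ndvd[of "int m"] assms by simp

lemma P_ne0: "P \<noteq> 0"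
  using nunit tf[of 1] by auto

lemma Ppow_cancel: "P ^ k * x = 0 \<Longrightarrow> x = 0"
  by (induction k) (auto simp: mult.assoc dest: tf)

lemma val_decomp: assumes "x \<noteq> 0" shows "\<exists>n u. x = P ^ n * u \<and> \<not> P dvd u"
proof -
  have "\<exists>n. \<not> P ^ n dvd x" using sep assms by blast
  define n where "n = (LEAST n. \<not> P ^ n dvd x)"
  have n1: "\<not> P ^ n dvd x" unfolding n_def by (rule LeastI_ex) fact
  have "n \<noteq> 0" using n1 by (metis one_dvd power_0)
  then obtain m where m: "n = Suc m" by (cases n) auto
  have "P ^ m dvd x" using not_less_Least[of m "\<lambda>n. \<not> P ^ n dvd x"] m n_def by auto
  then obtain u where u: "x = P ^ m * u" by (auto elim: dvdE)
  have "\<not> P dvd u"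
  proof
    assume "P dvd u" then have "P ^ n dvd x" using u m by (simp add: mult_dvd_mono mult.commute)
    then show False using n1 by simp
  qed
  then show ?thesis using u by blast
qed

lemma domain: "x * y = (0::'w) \<Longrightarrow> x = 0 \<or> y = 0"
proof (rule ccontr)
  assume xy: "x * y = 0" and "\<not> (x = 0 \<or> y = 0)"
  then obtain n u m v where "x = P ^ n * u" "\<not> P dvd u" "y = P ^ m * v" "\<not> P dvd v"
    using val_decomp by meson
  then have "P ^ (n + m) * (u * v) = 0" "\<not> P dvd u * v" using xy pprime
    by (auto simp: power_add algebra_simps)
  then show False using Ppow_cancel by fastforce
qed

lemma of_nat_ne0: assumes "m > 0" shows "(of_nat m :: 'w) \<noteq> 0"
proof -
  obtain u :: nat where "m = p ^ multiplicity p m * u" "\<not> p dvd u"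
    using multiplicity_decompose'[of m p] assms prime not_prime_unit by blast
  then obtain a u :: nat where au: "m = p ^ a * u" "\<not> p dvd u" by blast
  have "(of_nat u :: 'w) \<noteq> 0" using nat_ndvd[OF au(2)] by auto
  moreover have "P ^ a \<noteq> 0" using P_ne0 by (induction a) (auto dest: domain)
  ultimately show ?thesis using au(1) domain by (metis of_nat_mult of_nat_power)
qed

lemma nat_cancel: "m > 0 \<Longrightarrow> of_nat m * x = (0::'w) \<Longrightarrow> x = 0"
  using of_nat_ne0 domain by blast

lemma nat_cancel': "m > 0 \<Longrightarrow> of_nat m * x = of_nat m * (y::'w) \<Longrightarrow> x = y"
  using nat_cancel[of m "x - y"] by (simp add: algebra_simps)

end

context wl
begin

lemma p_gt2: "p > 2"
proof -
  have "p \<ge> 2" using prime_ge_2_nat[OF prime] .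
  moreover have "p \<noteq> 2" using odd by auto
  ultimately show ?thesis by simp
qed

lemma diff_dvd_pow: "(x - y) dvd (x ^ k - (y::'w) ^ k)"
proof (induction k)
  case 0 then show ?case by simp
next
  case (Suc k)
  have "x ^ Suc k - y ^ Suc k = x * (x ^ k - y ^ k) + (x - y) * y ^ k" by (simp add: algebra_simps)
  then show ?case using Suc by simp
qed

lemma pow_cong: assumes "k \<ge> 1" "P ^ k dvd (x - y)" shows "P ^ Suc k dvd (x ^ p - y ^ p)"
proof -
  obtain d where x: "x = P ^ k * d + y" using assms(2) by (metis dvdE diff_add_cancel)
  have "x ^ p = (\<Sum>j\<le>p. of_nat (p choose j) * (P^k*d)^j * y^(p-j))"
    by (simp add: x binomial_ring)
  also have "\<dots> = y ^ p + (\<Sum>j\<in>{1..p}. of_nat (p choose j) * (P^k*d)^j * y^(p-j))"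
    by (simp add: atMost_atLeast0 sum.atLeast_Suc_atMost)
  finally have e: "x ^ p - y ^ p = (\<Sum>j\<in>{1..p}. of_nat (p choose j) * (P^k*d)^j * y^(p-j))"
    by simp
  have "P ^ Suc k dvd of_nat (p choose j) * (P^k*d)^j * y^(p-j)" if j: "j \<in> {1..p}" for j
  proof (cases "j = p")
    case True
    have "k * 2 \<le> k * p" using p_gt2 by simp
    then have "Suc k \<le> k * p" using assms(1) by linarith
    then have "P ^ Suc k dvd P ^ (k * p)" by (rule le_imp_power_dvd)
    then show ?thesis using True by (simp add: power_mult_distrib power_mult)
  next
    case False
    then have "p dvd (p choose j)" using j prime by (intro dvd_choose_prime) auto
    then obtain q where "p choose j = p * q" by (auto elim: dvdE)
    then have "P dvd of_nat (p choose j)" by simp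
    moreover have "P ^ k dvd (P^k*d)^j"
    proof -
      have "j = Suc (j - 1)" using j by auto
      then have "(P^k*d)^j = (P^k*d) * (P^k*d)^(j-1)" by (metis power_Suc)
      then show ?thesis by simp
    qed
    ultimately have "P * P ^ k dvd of_nat (p choose j) * (P^k*d)^j" by (rule mult_dvd_mono)
    then show ?thesis by simp
  qed
  then show ?thesis unfolding e by (intro dvd_sum) auto
qed

lemma pow_cong_iter: assumes "P dvd (x - y)" shows "P ^ Suc n dvd (x ^ (p ^ n) - y ^ (p ^ n))"
proof (induction n)
  case 0 then show ?case using assms by simp
next
  case (Suc n)
  have "P ^ Suc (Suc n) dvd ((x ^ (p ^ n)) ^ p - (y ^ (p ^ n)) ^ p)"
    by (rule pow_cong) (use Suc in auto)
  then show ?case by (simp add: power_mult[symmetric] mult.commute)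
qed

lemma cong2W: "[a = b] (mod p) \<Longrightarrow> P dvd (of_nat a - of_nat b)"
proof -
  assume "[a = b] (mod p)"
  then have "int p dvd int a - int b" by (metis cong_iff_dvd_diff cong_int_iff)
  then obtain q where "int a - int b = int p * q" by (auto elim: dvdE)
  then have "of_int (int a - int b) = P * (of_int q :: 'w)" by (metis of_int_mult of_int_of_nat_eq)
  then show ?thesis by (auto simp add: dvd_def)
qed

lemma W2cong: "P dvd (of_nat a - of_nat b) \<Longrightarrow> [a = b] (mod p)"
proof (rule ccontr)
  assume "P dvd (of_nat a - of_nat b)" "\<not> [a = b] (mod p)"
  then have "\<not> int p dvd int a - int b" by (metis cong_iff_dvd_diff cong_int_iff)
  then have "\<not> P dvd of_int (int a - int b)" by (rule int_ndvd)
  then show False using \<open>P dvd (of_nat a - of_nat b)\<close> by simp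
qed

lemma teich:
  assumes "\<not> p dvd g"
  shows "\<exists>t::'w. t ^ (p - 1) = 1 \<and> P dvd (t - of_nat g) \<and> (\<forall>n. P ^ n dvd (t - of_nat (g ^ (p ^ n))))"
proof -
  have fe: "[g ^ (p - 1) = 1] (mod p)" using fermat_theorem prime assms by blast
  have gp: "P dvd ((of_nat g :: 'w) ^ p - of_nat g)"
  proof -
    have "P dvd ((of_nat g :: 'w) ^ (p - 1) - 1)" using cong2W[OF fe] by simp
    then have "P dvd (of_nat g :: 'w) * ((of_nat g :: 'w) ^ (p - 1) - 1)" by simp
    moreover have "(of_nat g :: 'w) * ((of_nat g :: 'w) ^ (p - 1) - 1) = of_nat g ^ p - of_nat g"
      using prime_gt_0_nat[OF prime] by (simp add: algebra_simps power_eq_if)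
    ultimately show ?thesis by simp
  qed
  define s where "s n = (of_nat g :: 'w) ^ (p ^ n)" for n
  have "P ^ Suc n dvd (s (Suc n) - s n)" for n
    using pow_cong_iter[OF gp, of n] by (simp add: s_def power_mult[symmetric] mult.commute)
  then have "P ^ n dvd (s (Suc n) - s n)" for n
    using dvd_trans[OF le_imp_power_dvd[of n "Suc n" P]] by simp
  then obtain t where t: "\<And>n. P ^ n dvd (t - s n)" using compl by blast
  have tp: "P ^ Suc n dvd (t ^ p - t)" if "n \<ge> 1" for n
  proof -
    have "P ^ Suc n dvd (t ^ p - s n ^ p)" using pow_cong[OF that t[of n]] .
    moreover have "s n ^ p = s (Suc n)" by (simp add: s_def power_mult[symmetric] mult.commute)
    ultimately have "P ^ Suc n dvd (t ^ p - s (Suc n))" by simp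
    moreover have "P ^ Suc n dvd (t - s (Suc n))" by (rule t)
    ultimately have "P ^ Suc n dvd (t ^ p - s (Suc n)) - (t - s (Suc n))" by (rule dvd_diff)
    then show ?thesis by simp
  qed
  have "P ^ m dvd (t ^ p - t)" for m
  proof -
    have "P ^ m dvd P ^ Suc (max 1 m)" by (rule le_imp_power_dvd) auto
    then show ?thesis using tp[of "max 1 m"] by (meson dvd_trans max.cobounded1)
  qed
  then have tpt: "t ^ p = t" using sep[of "t ^ p - t"] by simp
  have "P dvd (t - s 1)" using t[of 1] by simp
  then have "P dvd (t - s 1) + ((of_nat g :: 'w) ^ p - of_nat g)" using gp by (rule dvd_add)
  then have tg: "P dvd (t - of_nat g)" by (simp add: s_def)
  have "t \<noteq> 0"
  proof
    assume "t = 0"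
    then have "P dvd - of_nat g" using tg by simp
    then have "P dvd of_nat g" by (simp only: dvd_minus_iff)
    then show False using nat_ndvd assms by blast
  qed
  moreover have "t * (t ^ (p - 1) - 1) = 0"
    using tpt prime_gt_0_nat[OF prime] by (simp add: algebra_simps power_eq_if)
  ultimately have "t ^ (p - 1) = 1" using domain by fastforce
  moreover have "P ^ n dvd (t - of_nat (g ^ (p ^ n)))" for n using t[of n] by (simp add: s_def)
  ultimately show ?thesis using tg by blast
qed

end

context wl
begin

definition q :: nat where "q = p - 1"
abbreviation G :: "'w set" where "G \<equiv> Gamma_f p"

lemma q_ge2: "q \<ge> 2" using p_gt2 by (simp add: q_def)
lemma p_q: "p - 1 = q" by (simp add: q_def)
lemma G_def': "G = {z. z ^ q = 1}" unfolding Gamma_f_def p_q ..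

lemma tt_exists: "\<exists>t::'w. t ^ q = 1 \<and> (\<forall>k. 0 < k \<and> k < q \<longrightarrow> t ^ k \<noteq> 1) \<and> (\<forall>n. \<exists>M. P ^ n dvd (t - of_nat M))"
proof -
  obtain g where g: "residue_primroot p g" using prime_primitive_root_exists[of p] prime prime_gt_1_nat by blast
  then have cop: "coprime p g" and ordg: "ord p g = q"
    unfolding residue_primroot_def using totient_prime[OF prime] by (auto simp: q_def)
  have ndvd: "\<not> p dvd g"
  proof
    assume "p dvd g" then have "is_unit p" using cop coprime_absorb_left by blast
    then show False using prime by simp
  qed
  obtain t :: 'w where t: "t ^ q = 1" "P dvd (t - of_nat g)" "\<And>n. P ^ n dvd (t - of_nat (g ^ (p ^ n)))"
    using teich[OF ndvd] unfolding p_q by blast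
  have "t ^ k \<noteq> 1" if k: "0 < k" "k < q" for k
  proof
    assume tk: "t ^ k = 1"
    have "P dvd (t ^ k - (of_nat g) ^ k)" using t(2) diff_dvd_pow dvd_trans by blast
    then have "P dvd - (of_nat (g ^ k) - of_nat 1)" using tk by simp
    then have "P dvd (of_nat (g ^ k) - of_nat 1)" by (simp only: dvd_minus_iff)
    then have "[g ^ k = 1] (mod p)" by (rule W2cong)
    then show False using ord_minimal[of k p g] k ordg by simp
  qed
  then show ?thesis using t by blast
qed

definition tt :: 'w where
  "tt = (SOME t. t ^ q = 1 \<and> (\<forall>k. 0 < k \<and> k < q \<longrightarrow> t ^ k \<noteq> 1) \<and> (\<forall>n. \<exists>M. P ^ n dvd (t - of_nat M)))"

lemma tt_props: "tt ^ q = 1" "\<And>k. 0 < k \<Longrightarrow> k < q \<Longrightarrow> tt ^ k \<noteq> 1" "\<And>n. \<exists>M. P ^ n dvd (tt - of_nat M)"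
  using someI_ex[OF tt_exists] unfolding tt_def[symmetric] by blast+

lemma pp: "((x::'w) ^ a) ^ b = (x ^ b) ^ a"
  by (simp add: power_mult[symmetric] mult.commute)

lemma GS: assumes "u ^ q = 1" "u \<noteq> 1" shows "(\<Sum>k<q. u ^ k) = (0::'w)"
proof -
  have "(u - 1) * (\<Sum>k<q. u ^ k) = 0" using assms(1) power_diff_1_eq[of u q] by simp
  then show ?thesis using assms(2) domain by force
qed

lemma tpow_mod: "tt ^ k = tt ^ (k mod q)"
proof -
  have "k = q * (k div q) + k mod q" by simp
  then have "tt ^ k = tt ^ (q * (k div q) + k mod q)" by (rule arg_cong)
  also have "\<dots> = (tt ^ q) ^ (k div q) * tt ^ (k mod q)" by (simp only: power_add power_mult)
  finally show ?thesis using tt_props(1) by simp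
qed

lemma tpow_eq1: "tt ^ k = 1 \<longleftrightarrow> q dvd k"
proof
  assume "tt ^ k = 1"
  then have "tt ^ (k mod q) = 1" using tpow_mod by simp
  moreover have "k mod q < q" using q_ge2 by simp
  ultimately have "k mod q = 0" using tt_props(2) by blast
  then show "q dvd k" by auto
next
  assume "q dvd k"
  then have "k mod q = 0" by simp
  then show "tt ^ k = 1" using tpow_mod[of k] by simp
qed

lemma unit_G: "z \<in> G \<Longrightarrow> z * z ^ (q - 1) = 1"
  unfolding G_def' using q_ge2 power_eq_if[of z q] by simp

lemma one_G: "1 \<in> G" unfolding G_def' by simp
lemma mult_G: "z \<in> G \<Longrightarrow> w \<in> G \<Longrightarrow> z * w \<in> G"
  unfolding G_def' by (simp add: power_mult_distrib)
lemma pow_G: assumes "z \<in> G" shows "z ^ k \<in> G"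
proof -
  have "(z ^ k) ^ q = (z ^ q) ^ k" by (rule pp)
  then show ?thesis using assms unfolding G_def' by simp
qed
lemma tt_G: "tt \<in> G" unfolding G_def' using tt_props(1) by simp

lemma G_sub: assumes "z ^ q = 1" shows "\<exists>k<q. z = tt ^ k"
proof (rule ccontr)
  assume nz: "\<not> ?thesis"
  define ti where "ti = tt ^ (q - 1)"
  have tti: "tt * ti = 1" using unit_G[OF tt_G] ti_def by simp
  have "(\<Sum>j<q. (z * ti ^ k) ^ j) = 0" if "k < q" for k
  proof (rule GS)
    have "ti ^ q = (tt ^ q) ^ (q - 1)" unfolding ti_def by (rule pp)
    then have tiq: "ti ^ q = 1" using tt_props(1) by simp
    have "(ti ^ k) ^ q = (ti ^ q) ^ k" by (rule pp)
    then show "(z * ti ^ k) ^ q = 1" using assms tiq by (simp add: power_mult_distrib)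
    show "z * ti ^ k \<noteq> 1"
    proof
      assume "z * ti ^ k = 1"
      then have "z * ti ^ k * tt ^ k = tt ^ k" by simp
      moreover have "z * ti ^ k * tt ^ k = z * (tt * ti) ^ k" by (simp add: power_mult_distrib algebra_simps)
      ultimately have "z = tt ^ k" using tti by simp
      then show False using nz that by blast
    qed
  qed
  then have "(\<Sum>k<q. \<Sum>j<q. (z * ti ^ k) ^ j) = 0" by simp
  moreover have "(\<Sum>k<q. \<Sum>j<q. (z * ti ^ k) ^ j) = (\<Sum>j<q. z ^ j * (\<Sum>k<q. (ti ^ j) ^ k))"
    by (subst sum.swap) (simp add: sum_distrib_left power_mult_distrib power_mult[symmetric] mult.commute)
  moreover have "(\<Sum>k<q. (ti ^ j) ^ k) = (if j = 0 then of_nat q else 0)" if "j < q" for j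
  proof (cases "j = 0")
    case False
    show ?thesis
    proof -
      have "(ti ^ j) ^ q = (ti ^ q) ^ j" by (rule pp)
      moreover have "ti ^ q = (tt ^ q) ^ (q - 1)" unfolding ti_def by (rule pp)
      ultimately have "(ti ^ j) ^ q = 1" using tt_props(1) by simp
      moreover have "ti ^ j \<noteq> 1"
      proof
        assume "ti ^ j = 1"
        moreover have "(tt * ti) ^ j = tt ^ j * ti ^ j" by (simp add: power_mult_distrib)
        ultimately have "tt ^ j = 1" using tti by simp
        then show False using tt_props(2)[of j] False that by simp
      qed
      ultimately show ?thesis using GS False by simp
    qed
  qed simp
  ultimately have "(\<Sum>j<q. z ^ j * (if j = 0 then of_nat q else 0)) = (0::'w)" by simp
  moreover have "(\<Sum>j<q. z ^ j * (if j = 0 then of_nat q else 0)) = (of_nat q :: 'w)"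
    using q_ge2 by (simp add: if_distrib sum.delta cong: if_cong)
  ultimately show False using of_nat_ne0[of q] q_ge2 by simp
qed

lemma G_eq: "G = (\<lambda>k. tt ^ k) ` {..<q}"
proof
  show "G \<subseteq> (\<lambda>k. tt ^ k) ` {..<q}" using G_sub unfolding G_def' by blast
  show "(\<lambda>k. tt ^ k) ` {..<q} \<subseteq> G" using pow_G tt_G by blast
qed

lemma inj_tt: "inj_on (\<lambda>k. tt ^ k) {..<q}"
proof (rule inj_onI)
  have main: "a = b" if ab: "a \<le> b" "b < q" "tt ^ a = tt ^ b" for a b
  proof (rule ccontr)
    assume "a \<noteq> b"
    have "tt ^ b = tt ^ a * tt ^ (b - a)" using ab power_add[of tt a "b - a"] by simp
    then have "tt ^ a * (tt ^ (b - a) - 1) = 0" using ab by (simp add: algebra_simps)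
    moreover have "tt ^ a \<noteq> 0" using pow_G[OF tt_G, of a] unit_G by force
    ultimately have "tt ^ (b - a) = 1" using domain by force
    then show False using tt_props(2)[of "b - a"] ab \<open>a \<noteq> b\<close> by simp
  qed
  fix a b assume "a \<in> {..<q}" "b \<in> {..<q}" "tt ^ a = tt ^ b"
  then show "a = b" using main[of a b] main[of b a] by (cases "a \<le> b") auto
qed

lemma finite_G: "finite G" using G_eq by simp
lemma card_G: "card G = q" using G_eq inj_tt by (simp add: card_image)

lemma sum_G: "(\<Sum>z\<in>G. f z) = (\<Sum>k<q. f (tt ^ k))"
  unfolding G_eq using sum.reindex[OF inj_tt] by simp

lemma orth: "(\<Sum>z\<in>G. z ^ j) = (if q dvd j then of_nat q else (0::'w))"
proof -
  have "(\<Sum>z\<in>G. z ^ j) = (\<Sum>k<q. (tt ^ j) ^ k)" unfolding sum_G by (simp add: power_mult[symmetric] mult.commute)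
  also have "\<dots> = (if q dvd j then of_nat q else 0)"
  proof (cases "q dvd j")
    case True then have "tt ^ j = 1" using tpow_eq1 by simp
    then show ?thesis using True by simp
  next
    case False
    have "(tt ^ j) ^ q = (tt ^ q) ^ j" by (rule pp)
    then have "(tt ^ j) ^ q = 1" using tt_props(1) by simp
    then show ?thesis using GS False tpow_eq1 by simp
  qed
  finally show ?thesis .
qed

lemma winv_unique: "x * y = 1 \<Longrightarrow> winv x = (y::'w)"
  unfolding winv_def by (rule the_equality) (auto, metis mult.assoc mult.commute mult_1_right)

lemma winv_G: "z \<in> G \<Longrightarrow> winv z = z ^ (q - 1)"
  using unit_G winv_unique by blast

lemma q_unit: "of_nat q * winv (of_nat q) = (1::'w)"
proof -
  have "\<not> p dvd q"
  proof
    assume "p dvd q" then have "p \<le> q" using q_ge2 by (intro dvd_imp_le) auto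
    then show False using p_gt2 by (simp add: q_def)
  qed
  then obtain y where "of_nat q * y = (1::'w)" using unit nat_ndvd by blast
  then show ?thesis using winv_unique by simp
qed

lemma bij_mult: assumes "w \<in> G" shows "bij_betw (\<lambda>z. z * w) G G"
proof (rule bij_betwI[where g = "\<lambda>z. z * w ^ (q - 1)"])
  show "(\<lambda>z. z * w) \<in> G \<rightarrow> G" using mult_G assms by blast
  show "(\<lambda>z. z * w ^ (q - 1)) \<in> G \<rightarrow> G" using mult_G pow_G assms by blast
  show "x * w * w ^ (q - 1) = x" for x using unit_G[OF assms] by (simp add: mult.assoc)
  show "y * w ^ (q - 1) * w = y" for y using unit_G[OF assms]
    by (metis mult.assoc mult.commute mult_1_right)
qed

lemma approx_G: assumes "z \<in> G" shows "\<exists>M. P ^ n dvd (z - of_nat M)"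
proof -
  obtain k where z: "z = tt ^ k" using assms G_eq by blast
  obtain M where "P ^ n dvd (tt - of_nat M)" using tt_props(3) by blast
  then have "P ^ n dvd (tt ^ k - (of_nat M) ^ k)" using diff_dvd_pow dvd_trans by blast
  then show ?thesis using z by (auto simp flip: of_nat_power)
qed

end

lemma product_composition_lemma_cr:
  assumes c0: "c$0 = (0::'a::comm_ring_1)"
    and d0: "d$0 = 0"
  shows "((a oo c) * (b oo d))$n =
    sum (\<lambda>(k,m). a$k * b$m * (c^k * d^m) $ n) {(k,m). k + m \<le> n}"  (is "?l = ?r")
proof -
  let ?S = "{(k::nat, m::nat). k + m \<le> n}"
  have s: "?S \<subseteq> {0..n} \<times> {0..n}" by (simp add: subset_eq)
  have f: "finite {(k::nat, m::nat). k + m \<le> n}"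
    by (auto intro: finite_subset[OF s])
  have "?r = (\<Sum>(k, m) \<in> {(k, m). k + m \<le> n}. \<Sum>j = 0..n. a $ k * b $ m * (c ^ k $ j * d ^ m $ (n - j)))"
    by (simp add: fps_mult_nth sum_distrib_left)
  also have "\<dots> = (\<Sum>i = 0..n. \<Sum>(k,m)\<in>{(k,m). k+m \<le> n}. a $ k * c ^ k $ i * b $ m * d ^ m $ (n-i))"
    unfolding sum.swap [where A = "{0..n}"] by (intro sum.cong refl) (clarsimp simp: mult_ac)
  also have "... = (\<Sum>i = 0..n.
                    \<Sum>q = 0..i. \<Sum>j = 0..n - i. a $ q * c ^ q $ i * (b $ j * d ^ j $ (n - i)))"
    apply (rule sum.cong [OF refl])
    apply (simp add: sum.cartesian_product mult.assoc)
    apply (rule sum.mono_neutral_right[OF f], force)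
    apply clarsimp
    subgoal for x k m
      by (cases "k \<le> x"; cases "m \<le> n - x")
        (auto simp: startsby_zero_power_prefix[OF c0, rule_format] startsby_zero_power_prefix[OF d0, rule_format])
    done

  also have "\<dots> = ?l"
    by (simp add: fps_mult_nth fps_compose_nth sum_product)
  finally show ?thesis by simp
qed


lemma fps_compose_mult_distrib_cr:
  assumes c0: "c $ 0 = (0::'a::comm_ring_1)"
  shows "(a * b) oo c = (a oo c) * (b oo c)"
proof (clarsimp simp add: fps_eq_iff)
  fix n
  have "((a oo c) * (b oo c))$n = sum (\<lambda>s. sum (\<lambda>i. a$i * b$(s - i) * (c^s) $ n) {0..s}) {0..n}"
    unfolding product_composition_lemma_cr[OF c0 c0] power_add[symmetric]
    unfolding sum_pair_less_iff[where a = "\<lambda>k. a$k" and b="\<lambda>m. b$m" and c="\<lambda>s. (c ^ s)$n" and n = n] ..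
  moreover have "(a * b oo c) $ n = (\<Sum>s = 0..n. \<Sum>i = 0..s. a $ i * b $ (s - i) * c ^ s $ n)"
    by (simp add: fps_compose_nth fps_mult_nth sum_distrib_right)
  ultimately show "(a * b oo c) $ n = ((a oo c) * (b oo c)) $ n" by simp
qed


lemma fps_compose_power_cr:
  assumes c0: "c$0 = (0::'a::comm_ring_1)"
  shows "(a oo c)^n = a^n oo c"
  by (induction n) (simp_all add: fps_compose_mult_distrib_cr[OF c0])


lemma fps_compose_assoc_cr:
  assumes c0: "c$0 = (0::'a::comm_ring_1)"
    and b0: "b$0 = 0"
  shows "a oo (b oo c) = a oo b oo c" (is "?l = ?r")
proof -
  have "?l$n = ?r$n" for n
  proof -
    have "?l$n = (sum (\<lambda>i. (fps_const (a$i) * b^i) oo c) {0..n})$n"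
      by (simp add: fps_compose_nth fps_compose_power_cr[OF c0] fps_const_mult_apply_left
        sum_distrib_left mult.assoc fps_sum_nth)
    also have "\<dots> = ((sum (\<lambda>i. fps_const (a$i) * b^i) {0..n}) oo c)$n"
      by (simp add: fps_compose_sum_distrib)
    also have "... = (\<Sum>i = 0..n. \<Sum>j = 0..n. a $ j * (b ^ j $ i * c ^ i $ n))"
      by (simp add: fps_compose_nth fps_sum_nth sum_distrib_right mult.assoc)
    also have "... = (\<Sum>i = 0..n. \<Sum>j = 0..i. a $ j * (b ^ j $ i * c ^ i $ n))"
      by (intro sum.cong [OF refl] sum.mono_neutral_right; simp add: b0 startsby_zero_power_prefix)
    also have "\<dots> = ?r$n"
      by (simp add: fps_compose_nth  sum_distrib_right mult.assoc)
    finally show ?thesis .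
  qed
  then show ?thesis
    by (simp add: fps_eq_iff)
qed


lemma fps_compose_deriv_cr:
  fixes a :: "'a::comm_ring_1 fps"
  assumes b0: "b$0 = 0"
  shows "fps_deriv (a oo b) = ((fps_deriv a) oo b) * fps_deriv b"
proof -
  have "(fps_deriv (a oo b))$n = (((fps_deriv a) oo b) * (fps_deriv b)) $n" for n
  proof -
    have "(fps_deriv (a oo b))$n = sum (\<lambda>i. a $ i * (fps_deriv (b^i))$n) {0.. Suc n}"
      by (simp add: fps_compose_def sum_distrib_left distrib_left mult.left_commute del: of_nat_Suc)
    also have "\<dots> = sum (\<lambda>i. a$i * ((fps_const (of_nat i)) * (fps_deriv b * (b^(i - 1))))$n) {0.. Suc n}"
      by (simp add: ac_simps fps_deriv_power del: fps_mult_left_const_nth of_nat_Suc)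
    also have "\<dots> = sum (\<lambda>i. of_nat i * a$i * (((b^(i - 1)) * fps_deriv b))$n) {0.. Suc n}"
      unfolding fps_mult_left_const_nth  by (simp add: ac_simps)
    also have "\<dots> = sum (\<lambda>i. of_nat i * a$i * (sum (\<lambda>j. (b^ (i - 1))$j * (fps_deriv b)$(n - j)) {0..n})) {0.. Suc n}"
      unfolding fps_mult_nth ..
    also have "\<dots> = sum (\<lambda>i. of_nat i * a$i * (sum (\<lambda>j. (b^ (i - 1))$j * (fps_deriv b)$(n - j)) {0..n})) {1.. Suc n}"
      by (intro sum.mono_neutral_right) (auto simp add: mult_delta_left not_le)
    also have "\<dots> = sum (\<lambda>i. of_nat (i + 1) * a$(i+1) * (sum (\<lambda>j. (b^ i)$j * of_nat (n - j + 1) * b$(n - j + 1)) {0..n})) {0.. n}"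
      unfolding fps_deriv_nth
      by (rule sum.reindex_cong [of Suc]) (simp_all add: mult.assoc)
    finally have th0: "(fps_deriv (a oo b))$n =
      sum (\<lambda>i. of_nat (i + 1) * a$(i+1) * (sum (\<lambda>j. (b^ i)$j * of_nat (n - j + 1) * b$(n - j + 1)) {0..n})) {0.. n}" .

    have "(((fps_deriv a) oo b) * (fps_deriv b))$n = sum (\<lambda>i. (fps_deriv b)$ (n - i) * ((fps_deriv a) oo b)$i) {0..n}"
      unfolding fps_mult_nth by (simp add: ac_simps)
    also have "\<dots> = sum (\<lambda>i. sum (\<lambda>j. of_nat (n - i +1) * b$(n - i + 1) * of_nat (j + 1) * a$(j+1) * (b^j)$i) {0..n}) {0..n}"
      unfolding fps_deriv_nth fps_compose_nth sum_distrib_left mult.assoc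
      by (intro sum.cong[OF refl] sum.mono_neutral_left)
         (auto simp: startsby_zero_power_prefix[OF b0, rule_format])
    also have "\<dots> = sum (\<lambda>i. of_nat (i + 1) * a$(i+1) * (sum (\<lambda>j. (b^ i)$j * of_nat (n - j + 1) * b$(n - j + 1)) {0..n})) {0.. n}"
      unfolding sum_distrib_left
      apply (subst sum.swap)
      apply (intro sum.cong[OF refl])
      apply (simp add: mult_ac)
      done
    finally show ?thesis
      unfolding th0 by simp
  qed
  then show ?thesis by (simp add: fps_eq_iff)
qed


lemma fps_compose_const_cr: "fps_const c oo b = fps_const (c::'a::comm_ring_1)"
  by (simp add: fps_eq_iff fps_compose_nth sum.atLeast_Suc_atMost)

lemma prod_cong_dvd:
  fixes f g :: "nat \<Rightarrow> 'a::comm_ring_1"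
  assumes "\<And>j. j \<in> A \<Longrightarrow> d dvd (f j - g j)"
  shows "d dvd (prod f A - prod g A)"
  using assms
proof (induction A rule: infinite_finite_induct)
  case (insert x F)
  have "prod f (insert x F) - prod g (insert x F) = f x * (prod f F - prod g F) + (f x - g x) * prod g F"
    using insert by (simp add: algebra_simps)
  then show ?case using insert by simp
qed auto

context wl
begin

lemma wbinom_ex: assumes z: "z \<in> G" shows "\<exists>c. of_nat (fact m) * c = (\<Prod>j<m. z - of_nat j)"
proof -
  define a where "a = multiplicity p (fact m :: nat)"
  obtain u :: nat where fm: "fact m = p ^ a * u" "\<not> p dvd u"
    using multiplicity_decompose'[of "fact m :: nat" p] prime not_prime_unit unfolding a_def
    by (metis fact_nonzero)
  obtain M0 where M0: "P ^ a dvd (z - of_nat M0)" using approx_G[OF z] by blast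
  define M where "M = M0 + m * p ^ a"
  have e0: "z - of_nat M = (z - of_nat M0) - of_nat m * P ^ a" by (simp add: M_def algebra_simps)
  have zM: "P ^ a dvd (z - of_nat M)" unfolding e0 by (intro dvd_diff M0 dvd_triv_right)
  have "P ^ a dvd (\<Prod>j<m. z - of_nat j) - (\<Prod>j<m. of_nat M - of_nat j)"
    by (rule prod_cong_dvd) (use zM in simp)
  then obtain y where y: "(\<Prod>j<m. z - of_nat j) - (\<Prod>j<m. of_nat M - of_nat j) = P ^ a * y"
    by (auto elim: dvdE)
  have "1 \<le> p ^ a" using prime_gt_0_nat[OF prime] by simp
  then have "m * 1 \<le> m * p ^ a" by (rule mult_le_mono2)
  then have Mm: "m \<le> M" unfolding M_def by linarith
  have rprod: "(\<Prod>i<m. real M - real i) = real (\<Prod>i<m. M - i)"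
  proof -
    have "(\<Prod>i<m. real M - real i) = (\<Prod>i<m. real (M - i))"
      by (rule prod.cong) (use Mm in \<open>auto simp: of_nat_diff\<close>)
    then show ?thesis by (simp add: of_nat_prod)
  qed
  have "real (fact m * (M choose m)) = (\<Prod>i<m. real M - real i)"
    using gbinomial_mult_fact[of m "real M"] binomial_gbinomial[where 'a=real, of M m]
    by (simp add: atLeast0LessThan)
  then have nat_eq: "fact m * (M choose m) = (\<Prod>i<m. M - i)"
    unfolding rprod by (simp only: of_nat_eq_iff)
  have "(\<Prod>i<m. (of_nat M - of_nat i :: 'w)) = (\<Prod>i<m. of_nat (M - i))"
    by (rule prod.cong) (use Mm in \<open>auto simp: of_nat_diff\<close>)
  then have "(of_nat (fact m * (M choose m)) :: 'w) = (\<Prod>i<m. of_nat M - of_nat i)"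
    unfolding nat_eq by (simp add: of_nat_prod)
  then have e: "(\<Prod>j<m. z - of_nat j) = of_nat (fact m) * of_nat (M choose m) + P ^ a * y"
    using y by (simp add: algebra_simps)
  obtain v where v: "(of_nat u :: 'w) * v = 1" using unit nat_ndvd fm(2) by blast
  have "of_nat (fact m) * (v * (of_nat u * of_nat (M choose m) + y)) = P ^ a * (of_nat u * v) * (of_nat u * of_nat (M choose m) + y)"
    using fm(1) by (simp add: algebra_simps)
  also have "\<dots> = (\<Prod>j<m. z - of_nat j)" using v e fm(1) by (simp add: algebra_simps)
  finally show ?thesis by blast
qed

lemma wbinom: assumes "z \<in> G" shows "of_nat (fact m) * wbinom z m = (\<Prod>j<m. z - of_nat j)"
proof -
  obtain c where c: "of_nat (fact m) * c = (\<Prod>j<m. z - of_nat j)" using wbinom_ex[OF assms] by blast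
  have "wbinom z m = c" unfolding wbinom_def
  proof (rule the_equality)
    show "of_nat (fact m) * c = (\<Prod>j<m. z - of_nat j)" by (rule c)
    fix c' assume "of_nat (fact m) * c' = (\<Prod>j<m. z - of_nat j)"
    then show "c' = c" using c nat_cancel'[of "fact m"] by (metis fact_gt_zero of_nat_fact)
  qed
  then show ?thesis using c by simp
qed

lemma wbinom_0: assumes "z \<in> G" shows "wbinom z 0 = 1"
  using wbinom[OF assms, of 0] by simp

lemma wbinom_rec: assumes "z \<in> G"
  shows "of_nat (Suc k) * wbinom z (Suc k) = (z - of_nat k) * wbinom z k"
proof -
  have "of_nat (fact k) * (of_nat (Suc k) * wbinom z (Suc k)) = of_nat (fact (Suc k)) * wbinom z (Suc k)"
    by (simp add: algebra_simps)
  also have "\<dots> = (\<Prod>j<Suc k. z - of_nat j)" by (rule wbinom[OF assms])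
  also have "\<dots> = (\<Prod>j<k. z - of_nat j) * (z - of_nat k)" by simp
  also have "\<dots> = of_nat (fact k) * ((z - of_nat k) * wbinom z k)"
    using wbinom[OF assms, of k] by (simp add: algebra_simps)
  finally show ?thesis using nat_cancel'[of "fact k"] by (metis fact_gt_zero)
qed

lemma cyc_sub_0 [simp]: "cyc_sub z $ 0 = 0"
  by (simp add: cyc_sub_def)

lemma F_nth: assumes "z \<in> G" shows "(1 + cyc_sub z) $ k = wbinom z k"
  using wbinom_0[OF assms] by (cases k) (simp_all add: cyc_sub_def)

lemma cyc_sub_1: assumes "z \<in> G" shows "cyc_sub z $ 1 = z"
  using wbinom[OF assms, of 1] by (simp add: cyc_sub_def)

lemma ode_nth: "((1 + fps_X) * fps_deriv F) $ n = of_nat (Suc n) * F $ Suc n + of_nat n * (F $ n :: 'w)"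
  by (cases n) (simp_all add: distrib_right)

lemma ode_F: assumes "z \<in> G"
  shows "(1 + fps_X) * fps_deriv (1 + cyc_sub z) = fps_const z * (1 + cyc_sub z)"
proof (rule fps_ext)
  fix n
  have "of_nat (Suc n) * wbinom z (Suc n) + of_nat n * wbinom z n = z * wbinom z n"
    using wbinom_rec[OF assms, of n] by (simp add: algebra_simps)
  then show "((1 + fps_X) * fps_deriv (1 + cyc_sub z)) $ n = (fps_const z * (1 + cyc_sub z)) $ n"
    unfolding ode_nth by (simp only: F_nth[OF assms] fps_mult_left_const_nth)
qed

lemma ode_unique:
  assumes "F $ 0 = H $ 0"
    and "(1 + fps_X) * fps_deriv F = fps_const c * F"
    and "(1 + fps_X) * fps_deriv H = fps_const c * (H :: 'w fps)"
  shows "F = H"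
proof -
  have "F $ n = H $ n" for n
  proof (induction n)
    case 0 then show ?case using assms(1) by simp
  next
    case (Suc n)
    have "((1 + fps_X) * fps_deriv F) $ n = (fps_const c * F) $ n" using assms(2) by simp
    then have f: "of_nat (Suc n) * F $ Suc n = c * F $ n - of_nat n * F $ n"
      unfolding ode_nth by (simp add: algebra_simps)
    have "((1 + fps_X) * fps_deriv H) $ n = (fps_const c * H) $ n" using assms(3) by simp
    then have h: "of_nat (Suc n) * H $ Suc n = c * H $ n - of_nat n * H $ n"
      unfolding ode_nth by (simp add: algebra_simps)
    show ?case using f h Suc nat_cancel'[of "Suc n"] by simp
  qed
  then show ?thesis by (simp add: fps_eq_iff)
qed

lemma cyc_compose: assumes w: "w \<in> G" and z: "z \<in> G"
  shows "cyc_sub w oo cyc_sub z = cyc_sub (w * z)"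
proof -
  let ?Cz = "cyc_sub z" and ?Fw = "1 + cyc_sub w"
  have c0: "?Cz $ 0 = 0" by simp
  define H where "H = ?Fw oo ?Cz"
  have H1: "H = 1 + (cyc_sub w oo ?Cz)" unfolding H_def by (simp add: fps_compose_add_distrib)
  have dH: "fps_deriv H = (fps_deriv ?Fw oo ?Cz) * fps_deriv (1 + ?Cz)"
    unfolding H_def using fps_compose_deriv_cr[OF c0] by simp
  have X1: "(1 + fps_X) oo ?Cz = 1 + ?Cz" by (simp add: fps_compose_add_distrib)
  have "(1 + fps_X) * fps_deriv H = (fps_deriv ?Fw oo ?Cz) * ((1 + fps_X) * fps_deriv (1 + ?Cz))"
    unfolding dH by (simp add: ac_simps)
  also have "\<dots> = fps_const z * ((fps_deriv ?Fw oo ?Cz) * ((1 + fps_X) oo ?Cz))"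
    unfolding ode_F[OF z] X1 by (simp add: ac_simps)
  also have "(fps_deriv ?Fw oo ?Cz) * ((1 + fps_X) oo ?Cz) = ((1 + fps_X) * fps_deriv ?Fw) oo ?Cz"
    by (simp add: fps_compose_mult_distrib_cr[OF c0] mult.commute)
  also have "\<dots> = fps_const w * H"
    unfolding ode_F[OF w] H_def by (simp add: fps_compose_mult_distrib_cr[OF c0] fps_compose_const_cr)
  finally have "(1 + fps_X) * fps_deriv H = fps_const (w * z) * H"
    by (simp add: ac_simps flip: fps_const_mult)
  moreover have "H $ 0 = (1 + cyc_sub (w * z)) $ 0" unfolding H1 by simp
  ultimately have "H = 1 + cyc_sub (w * z)"
    using ode_unique ode_F[OF mult_G[OF w z]] by blast
  then show ?thesis unfolding H1 by simp
qed

lemma gact_X: "gact z fps_X = cyc_sub z"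
  unfolding gact_def by simp
lemma gact_add: "gact z (f + g) = gact z f + gact z g"
  unfolding gact_def by (simp add: fps_compose_add_distrib)
lemma gact_diff: "gact z (f - g) = gact z f - gact z g"
  unfolding gact_def by (simp add: fps_compose_sub_distrib)
lemma gact_mult: "gact z (f * g) = gact z f * gact z g"
  unfolding gact_def by (simp add: fps_compose_mult_distrib_cr)
lemma gact_const: "gact z (fps_const c) = fps_const c"
  unfolding gact_def by (simp add: fps_compose_const_cr)
lemma gact_1: "gact z 1 = 1"
  unfolding gact_def by simp
lemma gact_0: "gact z 0 = 0"
  unfolding gact_def by simp
lemma gact_sum: "gact z (sum f A) = (\<Sum>i\<in>A. gact z (f i))"
  unfolding gact_def by (simp add: fps_compose_sum_distrib)
lemma gact_pow: "gact z (f ^ k) = gact z f ^ k"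
  unfolding gact_def by (simp add: fps_compose_power_cr)
lemma gact_cmult: "gact z (fps_const c * f) = fps_const c * gact z f"
  by (simp add: gact_mult gact_const)

lemma gact_gact: assumes "w \<in> G" "z \<in> G" shows "gact z (gact w f) = gact (w * z) f"
  unfolding gact_def using fps_compose_assoc_cr[of "cyc_sub z" "cyc_sub w" f] cyc_compose[OF assms]
  by simp

lemma cyc_sub_one: "cyc_sub 1 = (fps_X :: 'w fps)"
proof (rule fps_ext)
  fix n
  show "cyc_sub 1 $ n = (fps_X :: 'w fps) $ n"
  proof (cases "n \<ge> 2")
    case True
    have "(\<Prod>j<n. (1::'w) - of_nat j) = 0"
    proof (rule prod_zero)
      show "\<exists>a\<in>{..<n}. (1::'w) - of_nat a = 0" using True by (intro bexI[of _ 1]) auto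
    qed simp
    then have "of_nat (fact n) * wbinom (1::'w) n = 0" using wbinom[OF one_G, of n] by simp
    then have "wbinom (1::'w) n = 0" using nat_cancel[of "fact n"] by (metis fact_gt_zero of_nat_fact)
    then show ?thesis using True by (simp add: cyc_sub_def fps_X_def)
  next
    case False
    then consider "n = 0" | "n = 1" by linarith
    then show ?thesis
      by cases (use cyc_sub_1[OF one_G] in \<open>simp_all add: fps_X_def\<close>)
  qed
qed

lemma gact_one: "gact 1 f = (f :: 'w fps)"
  unfolding gact_def cyc_sub_one by simp

end

lemma sum_fps_const_mult:
  "(\<Sum>z\<in>A. fps_const (a z) * X) = fps_const (\<Sum>z\<in>A. a z) * (X :: 'a::comm_ring_1 fps)"
  by (induction A rule: infinite_finite_induct) (simp_all add: distrib_right flip: fps_const_add)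

context wl
begin

abbreviation ci :: 'w where "ci \<equiv> winv (of_nat q)"

lemma ci_q: "ci * of_nat q = 1" using q_unit by (simp add: mult.commute)

lemma proj_alt: "proj p i f = fps_const ci * (\<Sum>z\<in>G. fps_const ((z ^ (q - 1)) ^ i) * gact z f)"
  unfolding proj_def card_G by (intro arg_cong2[where f = "(*)"] refl sum.cong) (simp_all add: winv_G)

lemma S0_iff: "f \<in> S0 p \<longleftrightarrow> (\<forall>z\<in>G. gact z f = f)"
  unfolding S0_def by simp

lemma S0_const: "fps_const (c::'w) \<in> S0 p" by (simp add: S0_iff gact_const)
lemma S0_0: "(0::'w fps) \<in> S0 p" using S0_const[of 0] by simp
lemma S0_1: "(1::'w fps) \<in> S0 p" using S0_const[of 1] by simp
lemma S0_add: "(f::'w fps) \<in> S0 p \<Longrightarrow> g \<in> S0 p \<Longrightarrow> f + g \<in> S0 p" by (simp add: S0_iff gact_add)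
lemma S0_mult: "(f::'w fps) \<in> S0 p \<Longrightarrow> g \<in> S0 p \<Longrightarrow> f * g \<in> S0 p" by (simp add: S0_iff gact_mult)
lemma S0_sum: "(\<And>i. i \<in> A \<Longrightarrow> (f i :: 'w fps) \<in> S0 p) \<Longrightarrow> (\<Sum>i\<in>A. f i) \<in> S0 p"
  by (induction A rule: infinite_finite_induct) (auto intro: S0_add S0_0)
lemma S0_cmult: "(f::'w fps) \<in> S0 p \<Longrightarrow> fps_const c * f \<in> S0 p" by (intro S0_mult S0_const)

lemma proj_add: "proj p i (f + g :: 'w fps) = proj p i f + proj p i g"
  unfolding proj_alt by (simp add: gact_add distrib_left sum.distrib)
lemma proj_0: "proj p i (0::'w fps) = 0"
  unfolding proj_alt by (simp add: gact_0)
lemma proj_sum: "proj p i (\<Sum>j\<in>A. (f j :: 'w fps)) = (\<Sum>j\<in>A. proj p i (f j))"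
  by (induction A rule: infinite_finite_induct) (simp_all add: proj_add proj_0)

lemma proj_eigen: assumes w: "w \<in> G"
  shows "gact w (proj p i f) = fps_const (w ^ i) * proj p i f"
proof -
  have "gact w (proj p i f) = fps_const ci * (\<Sum>z\<in>G. fps_const ((z ^ (q - 1)) ^ i) * gact (z * w) f)"
    unfolding proj_alt using w by (simp add: gact_cmult gact_sum gact_gact)
  also have "(\<Sum>z\<in>G. fps_const ((z ^ (q - 1)) ^ i) * gact (z * w) f)
      = (\<Sum>z\<in>G. fps_const (w ^ i) * (fps_const (((z * w) ^ (q - 1)) ^ i) * gact (z * w) f))"
  proof (rule sum.cong[OF refl])
    fix z assume z: "z \<in> G"
    have "w ^ i * ((z * w) ^ (q - 1)) ^ i = (z ^ (q - 1)) ^ i * (w * w ^ (q - 1)) ^ i"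
      by (simp add: power_mult_distrib algebra_simps)
    also have "\<dots> = (z ^ (q - 1)) ^ i" using unit_G[OF w] by simp
    finally show "fps_const ((z ^ (q - 1)) ^ i) * gact (z * w) f
        = fps_const (w ^ i) * (fps_const (((z * w) ^ (q - 1)) ^ i) * gact (z * w) f)"
      by (simp add: mult.assoc[symmetric])
  qed
  also have "\<dots> = fps_const (w ^ i) * (\<Sum>z\<in>G. fps_const (((z * w) ^ (q - 1)) ^ i) * gact (z * w) f)"
    by (simp add: sum_distrib_left)
  also have "(\<Sum>z\<in>G. fps_const (((z * w) ^ (q - 1)) ^ i) * gact (z * w) f)
     = (\<Sum>z\<in>G. fps_const ((z ^ (q - 1)) ^ i) * gact z f)"
    using sum.reindex_bij_betw[OF bij_mult[OF w], of "\<lambda>y. fps_const ((y ^ (q - 1)) ^ i) * gact y f"]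
    by simp
  finally show ?thesis unfolding proj_alt by (simp add: ac_simps)
qed

definition T :: "'w fps" where "T = proj p 1 fps_X"

lemma T_0: "T $ 0 = 0"
  unfolding T_def proj_alt by (simp add: fps_sum_nth gact_X)

lemma cyc_sub_Suc0: "z \<in> G \<Longrightarrow> cyc_sub z $ Suc 0 = z"
  using cyc_sub_1 by simp

lemma T_1: "T $ 1 = 1"
proof -
  have "T $ 1 = ci * (\<Sum>z\<in>G. z ^ (q - 1) * z)"
    unfolding T_def proj_alt by (simp add: fps_sum_nth gact_X cyc_sub_Suc0 cong: sum.cong)
  also have "(\<Sum>z\<in>G. z ^ (q - 1) * z) = (\<Sum>z\<in>G. 1)"
    using unit_G by (intro sum.cong refl) (simp add: mult.commute)
  finally show ?thesis using card_G ci_q by simp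
qed

lemma gact_T: "w \<in> G \<Longrightarrow> gact w T = fps_const w * T"
  unfolding T_def using proj_eigen[of w 1] by simp

lemma gact_Tpow: "w \<in> G \<Longrightarrow> gact w (T ^ j) = fps_const (w ^ j) * T ^ j"
  by (simp add: gact_pow gact_T power_mult_distrib)

definition U :: "'w fps" where "U = fps_shift 1 T"
definition V :: "'w fps" where "V = fps_right_inverse U 1"

lemma T_XU: "T = fps_X * U"
  by (rule fps_ext) (simp add: U_def T_0)

lemma U_0: "U $ 0 = 1" unfolding U_def using T_1 by simp
lemma UV: "U * V = 1" unfolding V_def by (rule fps_right_inverse) (simp add: U_0)

lemma Tpow: "T ^ i = fps_X ^ i * U ^ i" unfolding T_XU by (simp add: power_mult_distrib)

lemma X_cancel: "fps_X ^ i * D = 0 \<Longrightarrow> D = (0 :: 'w fps)"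
proof (rule fps_ext)
  fix n assume "fps_X ^ i * D = 0"
  then have "(fps_X ^ i * D) $ (n + i) = 0" by simp
  then show "D $ n = 0 $ n" by (simp add: fps_X_power_mult_nth)
qed

lemma T_cancel: assumes "T ^ i * D = 0" shows "D = 0"
proof -
  have "fps_X ^ i * D * (U * V) ^ i = T ^ i * D * V ^ i"
    unfolding Tpow by (simp add: power_mult_distrib ac_simps)
  then have "fps_X ^ i * D = 0" using assms UV by simp
  then show ?thesis by (rule X_cancel)
qed

lemma Tpow_nth: "(T ^ i) $ i = 1"
  unfolding Tpow by (simp add: fps_X_power_mult_nth fps_nth_power_0 U_0)

lemma eigen_div:
  assumes i: "i < q" and h: "\<And>w. w \<in> G \<Longrightarrow> gact w h = fps_const (w ^ i) * h"
  shows "\<exists>A. A \<in> S0 p \<and> h = T ^ i * A"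
proof (cases "h = 0")
  case True
  then show ?thesis using S0_0 by auto
next
  case False
  define m where "m = subdegree h"
  define H where "H = fps_shift m h"
  have hH: "h = H * fps_X ^ m" unfolding H_def m_def by (rule subdegree_decompose)
  have H0: "H $ 0 \<noteq> 0" unfolding H_def m_def using False by simp
  define Dt where "Dt = fps_shift 1 (cyc_sub tt)"
  have cD: "cyc_sub tt = fps_X * Dt" unfolding Dt_def by (rule fps_ext) simp
  have Dt0: "Dt $ 0 = tt" unfolding Dt_def using cyc_sub_1[OF tt_G] by simp
  have "gact tt h = gact tt H * (fps_X * Dt) ^ m"
    unfolding hH by (simp add: gact_mult gact_pow gact_X cD)
  also have "\<dots> = (gact tt H * Dt ^ m) * fps_X ^ m" by (simp add: power_mult_distrib ac_simps)
  finally have "(gact tt h) $ m = (gact tt H * Dt ^ m) $ 0"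
    by (simp add: fps_X_power_mult_right_nth)
  also have "\<dots> = H $ 0 * tt ^ m" by (simp add: gact_def fps_nth_power_0 Dt0)
  finally have l: "(gact tt h) $ m = H $ 0 * tt ^ m" .
  have r: "(gact tt h) $ m = tt ^ i * H $ 0"
    using h[OF tt_G] hH by (simp add: fps_X_power_mult_right_nth)
  have "H $ 0 * (tt ^ m - tt ^ i) = 0" using l r by (simp add: algebra_simps)
  then have tmi: "tt ^ m = tt ^ i" using H0 domain by fastforce
  have mi: "i \<le> m"
  proof (rule ccontr)
    assume "\<not> i \<le> m"
    then have "tt ^ i = tt ^ m * tt ^ (i - m)" by (simp add: power_add[symmetric])
    then have "tt ^ m * (tt ^ (i - m) - 1) = 0" using tmi by (simp add: algebra_simps)
    moreover have "tt ^ m \<noteq> 0" using unit_G[OF pow_G[OF tt_G, of m]] by force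
    ultimately have "tt ^ (i - m) = 1" using domain by force
    then show False using tt_props(2)[of "i - m"] \<open>\<not> i \<le> m\<close> i by simp
  qed
  define A where "A = fps_X ^ (m - i) * H * V ^ i"
  have hA: "h = T ^ i * A"
  proof -
    have "T ^ i * A = fps_X ^ i * fps_X ^ (m - i) * H * (U * V) ^ i"
      unfolding A_def Tpow by (simp add: power_mult_distrib ac_simps)
    also have "\<dots> = H * fps_X ^ m" using mi UV by (simp add: power_add[symmetric] ac_simps)
    finally show ?thesis using hH by simp
  qed
  have "A \<in> S0 p"
    unfolding S0_iff
  proof
    fix w assume w: "w \<in> G"
    have "fps_const (w ^ i) * (T ^ i * gact w A) = gact w h"
      unfolding hA using w by (simp add: gact_mult gact_Tpow ac_simps)
    also have "\<dots> = fps_const (w ^ i) * (T ^ i * A)" using h[OF w] hA by simp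
    finally have "fps_const (w ^ i) * (T ^ i * (gact w A - A)) = 0" by (simp add: algebra_simps)
    then have z: "fps_const ((w ^ (q - 1)) ^ i) * (fps_const (w ^ i) * (T ^ i * (gact w A - A))) = 0" by simp
    have "(w ^ (q - 1)) ^ i * w ^ i = 1" using unit_G[OF w]
      by (simp add: power_mult_distrib[symmetric] mult.commute)
    then have c1: "fps_const ((w ^ (q - 1)) ^ i) * fps_const (w ^ i) = (1 :: 'w fps)"
      by (simp del: fps_const_power)
    have "T ^ i * (gact w A - A) = (fps_const ((w ^ (q - 1)) ^ i) * fps_const (w ^ i)) * (T ^ i * (gact w A - A))"
      unfolding c1 by simp
    also have "\<dots> = 0" using z by (simp only: mult.assoc)
    finally have "T ^ i * (gact w A - A) = 0" .
    then show "gact w A = A" using T_cancel by fastforce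
  qed
  then show ?thesis using hA by blast
qed

end

context wl
begin

lemma fps_const_sum': "fps_const (\<Sum>i\<in>A. f i) = (\<Sum>i\<in>A. fps_const (f i :: 'w))"
  by (induction A rule: infinite_finite_induct) (simp_all flip: fps_const_add)

lemma dvd_idx: assumes "i < q" "j < q" shows "q dvd ((q - 1) * i + j) \<longleftrightarrow> i = j"
proof -
  obtain r where qr: "q = Suc r" using q_ge2 by (cases q) auto
  have "(q - 1) * i + j + i = q * i + j" unfolding qr by simp
  then have "int ((q - 1) * i + j + i) = int (q * i + j)" by (rule arg_cong)
  then have "int ((q - 1) * i + j) + int i = int q * int i + int j" by simp
  then have qi: "int ((q - 1) * i + j) = int q * int i + (int j - int i)" by linarith
  have "q dvd ((q - 1) * i + j) \<longleftrightarrow> int q dvd int ((q - 1) * i + j)" by (rule int_dvd_int_iff[symmetric])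
  also have "\<dots> \<longleftrightarrow> int q dvd (int j - int i)" unfolding qi by (simp add: dvd_add_right_iff)
  also have "\<dots> \<longleftrightarrow> i = j"
  proof
    assume d: "int q dvd (int j - int i)"
    show "i = j"
    proof (rule ccontr)
      assume "i \<noteq> j"
      then have "int j - int i \<noteq> 0" by simp
      then have "\<bar>int q\<bar> \<le> \<bar>int j - int i\<bar>" using d by (rule dvd_imp_le_int)
      then show False using assms by linarith
    qed
  qed simp
  finally show ?thesis .
qed

lemma orth_idx: assumes "i < q" "j < q"
  shows "(\<Sum>z\<in>G. (z ^ (q - 1)) ^ i * z ^ j) = (if i = j then of_nat q else (0::'w))"
proof -
  have "(\<Sum>z\<in>G. (z ^ (q - 1)) ^ i * z ^ j) = (\<Sum>z\<in>G. z ^ ((q - 1) * i + j))"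
    by (simp add: power_mult power_add)
  then show ?thesis using orth dvd_idx[OF assms] by simp
qed

lemma PT: assumes "i < q" "j < q" "B \<in> S0 p"
  shows "proj p i (T ^ j * B) = (if i = j then T ^ j * B else 0)"
proof -
  have "(\<Sum>z\<in>G. fps_const ((z ^ (q - 1)) ^ i) * gact z (T ^ j * B))
      = (\<Sum>z\<in>G. fps_const ((z ^ (q - 1)) ^ i * z ^ j) * (T ^ j * B))"
  proof (rule sum.cong[OF refl])
    fix z assume z: "z \<in> G"
    have "gact z (T ^ j * B) = fps_const (z ^ j) * (T ^ j * B)"
      using assms(3) z by (simp add: gact_mult gact_Tpow S0_iff mult.assoc)
    then show "fps_const ((z ^ (q - 1)) ^ i) * gact z (T ^ j * B) = fps_const ((z ^ (q - 1)) ^ i * z ^ j) * (T ^ j * B)"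
      by (simp add: mult.assoc[symmetric])
  qed
  then have "proj p i (T ^ j * B) = fps_const ci * (\<Sum>z\<in>G. fps_const ((z ^ (q - 1)) ^ i * z ^ j) * (T ^ j * B))"
    unfolding proj_alt by simp
  also have "\<dots> = fps_const ci * (fps_const (if i = j then of_nat q else 0) * (T ^ j * B))"
    unfolding sum_fps_const_mult orth_idx[OF assms(1,2)] ..
  also have "\<dots> = (if i = j then T ^ j * B else 0)"
    using ci_q by (simp add: mult.assoc[symmetric])
  finally show ?thesis .
qed

lemma geo_G: assumes "y \<in> G" shows "(\<Sum>i<q. y ^ i) = (if y = 1 then of_nat q else (0::'w))"
proof (cases "y = 1")
  case False
  then show ?thesis using GS assms unfolding G_def' by simp
qed simp

lemma SP: "(\<Sum>i<q. proj p i f) = (f :: 'w fps)"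
proof -
  have "(\<Sum>i<q. proj p i f) = fps_const ci * (\<Sum>z\<in>G. \<Sum>i<q. fps_const ((z ^ (q - 1)) ^ i) * gact z f)"
    unfolding proj_alt by (simp add: sum_distrib_left sum.swap[of _ G])
  also have "\<dots> = fps_const ci * (\<Sum>z\<in>G. if z = 1 then fps_const (of_nat q) * f else 0)"
  proof (intro arg_cong2[where f = "(*)"] refl sum.cong)
    fix z assume z: "z \<in> G"
    have "z ^ (q - 1) \<in> G" using pow_G[OF z] .
    moreover have "z ^ (q - 1) = 1 \<longleftrightarrow> z = 1" using unit_G[OF z] by (metis mult_1_right power_one)
    ultimately show "(\<Sum>i<q. fps_const ((z ^ (q - 1)) ^ i) * gact z f) = (if z = 1 then fps_const (of_nat q) * f else 0)"
      unfolding sum_fps_const_mult using geo_G[of "z ^ (q - 1)"] by (simp add: gact_one)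
  qed
  also have "\<dots> = f" using one_G finite_G ci_q by (simp add: mult.assoc[symmetric])
  finally show ?thesis .
qed

definition E :: "'w fps" where "E = (\<Sum>j<q. T ^ j)"

lemma gact_E: "z \<in> G \<Longrightarrow> gact z E = (\<Sum>j<q. fps_const (z ^ j) * T ^ j)"
  unfolding E_def by (simp add: gact_sum gact_Tpow)

lemma triple: "(\<Sum>z\<in>G. (fps_const ci * (\<Sum>i<q. fps_const ((z ^ (q - 1)) ^ i) * X i)) * (\<Sum>j<q. fps_const (z ^ j) * Y j))
   = (\<Sum>i<q. X i * (Y i :: 'w fps))"
proof -
  have "(\<Sum>z\<in>G. (fps_const ci * (\<Sum>i<q. fps_const ((z ^ (q - 1)) ^ i) * X i)) * (\<Sum>j<q. fps_const (z ^ j) * Y j))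
     = (\<Sum>z\<in>G. \<Sum>i<q. \<Sum>j<q. fps_const (ci * ((z ^ (q - 1)) ^ i * z ^ j)) * (X i * Y j))"
  proof (intro sum.cong refl)
    fix z
    have "(fps_const ci * (\<Sum>i<q. fps_const ((z ^ (q - 1)) ^ i) * X i)) * (\<Sum>j<q. fps_const (z ^ j) * Y j)
      = fps_const ci * ((\<Sum>i<q. fps_const ((z ^ (q - 1)) ^ i) * X i) * (\<Sum>j<q. fps_const (z ^ j) * Y j))"
      by (rule mult.assoc)
    also have "\<dots> = fps_const ci * (\<Sum>i<q. \<Sum>j<q. (fps_const ((z ^ (q - 1)) ^ i) * X i) * (fps_const (z ^ j) * Y j))"
      by (simp only: sum_product)
    also have "\<dots> = (\<Sum>i<q. \<Sum>j<q. fps_const ci * ((fps_const ((z ^ (q - 1)) ^ i) * X i) * (fps_const (z ^ j) * Y j)))"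
      by (simp only: sum_distrib_left)
    also have "\<dots> = (\<Sum>i<q. \<Sum>j<q. fps_const (ci * ((z ^ (q - 1)) ^ i * z ^ j)) * (X i * Y j))"
      by (intro sum.cong refl) (simp only: fps_const_mult[symmetric] mult_ac)
    finally show "(fps_const ci * (\<Sum>i<q. fps_const ((z ^ (q - 1)) ^ i) * X i)) * (\<Sum>j<q. fps_const (z ^ j) * Y j)
      = (\<Sum>i<q. \<Sum>j<q. fps_const (ci * ((z ^ (q - 1)) ^ i * z ^ j)) * (X i * Y j))" .
  qed
  also have "\<dots> = (\<Sum>i<q. \<Sum>j<q. \<Sum>z\<in>G. fps_const (ci * ((z ^ (q - 1)) ^ i * z ^ j)) * (X i * Y j))"
    by (simp add: sum.swap[of _ G])
  also have "\<dots> = (\<Sum>i<q. \<Sum>j<q. fps_const (ci * (if i = j then of_nat q else 0)) * (X i * Y j))"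
    by (intro sum.cong refl) (simp only: sum_fps_const_mult sum_distrib_left[symmetric] orth_idx lessThan_iff)
  also have "\<dots> = (\<Sum>i<q. \<Sum>j<q. if i = j then X i * Y j else 0)"
    by (intro sum.cong refl) (use ci_q in simp)
  also have "\<dots> = (\<Sum>i<q. X i * Y i)"
    by (intro sum.cong refl) simp
  finally show ?thesis .
qed

lemma span: "\<exists>a. (\<forall>z\<in>G. a z \<in> S0 p) \<and> f = (\<Sum>z\<in>G. a z * gact z E)"
proof -
  have "\<forall>i. \<exists>A. i < q \<longrightarrow> A \<in> S0 p \<and> proj p i f = T ^ i * A"
    using eigen_div proj_eigen by blast
  then obtain A where A: "\<And>i. i < q \<Longrightarrow> A i \<in> S0 p \<and> proj p i f = T ^ i * A i"
    by metis
  define a where "a z = fps_const ci * (\<Sum>i<q. fps_const ((z ^ (q - 1)) ^ i) * A i)" for z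
  have "\<forall>z\<in>G. a z \<in> S0 p" unfolding a_def using A by (auto intro!: S0_cmult S0_sum S0_mult S0_const)
  moreover have "(\<Sum>z\<in>G. a z * gact z E) = f"
  proof -
    have "(\<Sum>z\<in>G. a z * gact z E) = (\<Sum>z\<in>G. a z * (\<Sum>j<q. fps_const (z ^ j) * T ^ j))"
      by (intro sum.cong refl) (simp add: gact_E)
    also have "\<dots> = (\<Sum>i<q. A i * T ^ i)" unfolding a_def by (rule triple)
    also have "\<dots> = (\<Sum>i<q. proj p i f)" using A by (intro sum.cong refl) (simp add: mult.commute)
    finally show ?thesis using SP by simp
  qed
  ultimately show ?thesis by metis
qed

lemma indep:
  assumes a: "\<forall>z\<in>G. a z \<in> S0 p" and s: "(\<Sum>z\<in>G. a z * gact z E) = 0"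
  shows "\<forall>z\<in>G. a z = 0"
proof
  define B where "B j = (\<Sum>w\<in>G. a w * fps_const (w ^ j))" for j
  have BS: "B j \<in> S0 p" for j unfolding B_def using a by (auto intro!: S0_sum S0_mult S0_const)
  have "(\<Sum>z\<in>G. a z * gact z E) = (\<Sum>j<q. T ^ j * B j)"
  proof -
    have "(\<Sum>z\<in>G. a z * gact z E) = (\<Sum>z\<in>G. \<Sum>j<q. T ^ j * (a z * fps_const (z ^ j)))"
      by (intro sum.cong refl) (simp add: gact_E sum_distrib_left mult_ac)
    also have "\<dots> = (\<Sum>j<q. T ^ j * B j)" unfolding B_def by (simp add: sum.swap[of _ G] sum_distrib_left)
    finally show ?thesis .
  qed
  then have s2: "(\<Sum>j<q. T ^ j * B j) = 0" using s by simp
  have B0: "B i = 0" if i: "i < q" for i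
  proof -
    have "proj p i (\<Sum>j<q. T ^ j * B j) = (\<Sum>j<q. if i = j then T ^ j * B j else 0)"
      unfolding proj_sum using i BS by (intro sum.cong refl) (simp add: PT)
    also have "\<dots> = T ^ i * B i" using i by simp
    finally have "T ^ i * B i = 0" using s2 proj_0 by simp
    then show ?thesis by (rule T_cancel)
  qed
  fix z assume z: "z \<in> G"
  have "(\<Sum>i<q. fps_const ((z ^ (q - 1)) ^ i) * B i) = (\<Sum>w\<in>G. a w * fps_const (\<Sum>i<q. (z ^ (q - 1) * w) ^ i))"
  proof -
    have "(\<Sum>i<q. fps_const ((z ^ (q - 1)) ^ i) * B i)
        = (\<Sum>i<q. \<Sum>w\<in>G. fps_const ((z ^ (q - 1)) ^ i) * (a w * fps_const (w ^ i)))"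
      unfolding B_def by (simp only: sum_distrib_left)
    also have "\<dots> = (\<Sum>w\<in>G. \<Sum>i<q. fps_const ((z ^ (q - 1)) ^ i) * (a w * fps_const (w ^ i)))"
      by (rule sum.swap)
    also have "\<dots> = (\<Sum>w\<in>G. \<Sum>i<q. a w * fps_const ((z ^ (q - 1) * w) ^ i))"
      by (intro sum.cong refl) (simp only: power_mult_distrib fps_const_mult[symmetric] mult_ac)
    also have "\<dots> = (\<Sum>w\<in>G. a w * fps_const (\<Sum>i<q. (z ^ (q - 1) * w) ^ i))"
      by (simp only: fps_const_sum' sum_distrib_left)
    finally show ?thesis .
  qed
  also have "\<dots> = (\<Sum>w\<in>G. if w = z then a z * fps_const (of_nat q) else 0)"
  proof (intro sum.cong refl)
    fix w assume w: "w \<in> G"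
    have y: "z ^ (q - 1) * w \<in> G" using z w by (intro mult_G pow_G)
    have "z ^ (q - 1) * w = 1 \<longleftrightarrow> w = z"
    proof
      assume "z ^ (q - 1) * w = 1"
      then have "z * (z ^ (q - 1) * w) = z" by simp
      then show "w = z" using unit_G[OF z] by (simp add: mult.assoc[symmetric])
    next
      assume "w = z" then show "z ^ (q - 1) * w = 1" using unit_G[OF z] by (simp add: mult.commute)
    qed
    then show "a w * fps_const (\<Sum>i<q. (z ^ (q - 1) * w) ^ i) = (if w = z then a z * fps_const (of_nat q) else 0)"
      using geo_G[OF y] by auto
  qed
  also have "\<dots> = a z * fps_const (of_nat q)" using z finite_G by simp
  finally have "a z * fps_const (of_nat q) = 0" using B0 by simp
  then have "fps_const ci * (a z * fps_const (of_nat q)) = 0" by simp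
  then show "a z = 0" using ci_q by (simp add: mult_ac)
qed

lemma proj_E: assumes "i < q" shows "proj p i E = T ^ i"
proof -
  have pt: "proj p i (T ^ j) = (if i = j then T ^ j else 0)" if "j < q" for j
    using PT[OF assms that S0_1] by simp
  have "proj p i E = (\<Sum>j<q. proj p i (T ^ j))" unfolding E_def proj_sum by simp
  also have "\<dots> = (\<Sum>j<q. if i = j then T ^ j else 0)"
    using pt by (intro sum.cong refl) simp
  finally show ?thesis using assms by simp
qed

lemma main:
  "\<exists>e :: 'w fps.
    (\<forall>f :: 'w fps. \<exists>a. (\<forall>z\<in>Gamma_f p. a z \<in> S0 p) \<and>
        f = (\<Sum>z\<in>Gamma_f p. a z * gact z e)) \<and>
    (\<forall>a. (\<forall>z\<in>Gamma_f p. a z \<in> S0 p) \<and> (\<Sum>z\<in>Gamma_f p. a z * gact z e) = 0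
        \<longrightarrow> (\<forall>z\<in>Gamma_f p. a z = 0)) \<and>
    (\<forall>i. i \<le> p - 2 \<longrightarrow> \<not> (fps_const (of_nat p) dvd proj p i e))"
proof (intro exI[of _ E] conjI allI impI)
  fix f :: "'w fps"
  show "\<exists>a. (\<forall>z\<in>G. a z \<in> S0 p) \<and> f = (\<Sum>z\<in>G. a z * gact z E)" by (rule span)
next
  fix a :: "'w \<Rightarrow> 'w fps"
  assume "(\<forall>z\<in>G. a z \<in> S0 p) \<and> (\<Sum>z\<in>G. a z * gact z E) = 0"
  then show "\<forall>z\<in>G. a z = 0" using indep by blast
next
  fix i assume "i \<le> p - 2"
  then have i: "i < q" unfolding q_def using p_gt2 by simp
  show "\<not> fps_const (of_nat p) dvd proj p i E"
  proof
    assume "fps_const (of_nat p) dvd proj p i E"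
    then obtain g where "T ^ i = fps_const P * g" using proj_E[OF i] by (auto elim: dvdE)
    then have "(T ^ i) $ i = P * g $ i" by simp
    then have "1 = P * g $ i" using Tpow_nth by simp
    then have "P dvd 1" by (rule dvdI)
    then show False using nunit by simp
  qed
qed

end

theorem lemma24:
  fixes p :: nat and W :: "'w::comm_ring_1 itself"
  assumes "prime p" and "odd p" and "witt_like p W"
  shows "\<exists>e :: 'w fps.
    (\<forall>f :: 'w fps. \<exists>a. (\<forall>z\<in>Gamma_f p. a z \<in> S0 p) \<and>
        f = (\<Sum>z\<in>Gamma_f p. a z * gact z e)) \<and>
    (\<forall>a. (\<forall>z\<in>Gamma_f p. a z \<in> S0 p) \<and> (\<Sum>z\<in>Gamma_f p. a z * gact z e) = 0
        \<longrightarrow> (\<forall>z\<in>Gamma_f p. a z = 0)) \<and>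
    (\<forall>i. i \<le> p - 2 \<longrightarrow> \<not> (fps_const (of_nat p) dvd proj p i e))"
proof -
  interpret wl p W using assms by unfold_locales
  show ?thesis by (rule main)
qed

end
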